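(* Assume $(TJ)$. Let $B$ be a ball of radius $r>0$, let $0<\rho\le r$, $\lambda\in\mathbb R$ and $\psi=\lambda\mathbf 1_B$. Then for every non-negative $f\in\mathcal F^{(\rho)}\cap L^\infty(M,\mu)$ and every $p\ge1$, $$\mathcal E^{(\rho)}(e^{-\psi}f,\,e^{\psi}f^{2p-1})\ge\frac1p\,\mathcal E^{(\rho)}(f^p),$$ where $\mathcal E^{(\rho)}(u)=\mathcal E^{(\rho)}(u,u)$.
   Context: $(M,d,\mu)$ is an ultra-metric measure space: $M$ is locally compact and separable, $d$ is an ultra-metric ($d(x,y)\le\max\{d(x,z),d(z,y)\}$), $\mu$ is a Radon measure with full support. Balls are $B(x,r)=\{y: d(x,y)\le r\}$. Let $j$ be a symmetric Radon measure on $(M\times M)\setminus\mathrm{diag}$ with $j(B,B^c)<\infty$ for every ball $B$; $\mathcal E(f,g)=\iint(f(x)-f(y))(g(x)-g(y))\,dj(x,y)$, $\mathcal F$ is the closure, in the norm $\sqrt{\mathcal E(u)+\|u\|_2^2}$, of finite linear combinations of indicators of disjoint compact balls. Fixed $\beta>0$, $R_0\in(0,\operatorname{diam}M]$. Condition $(TJ)$: there is a transition kernel $J(x,dy)$ with $dj(x,y)=J(x,dy)\,d\mu(x)$ and a constant $C$ with $J(x,B(x,r)^c)\le Cr^{-\beta}$ for all $x\in M$, $r\in(0,R_0)$. Truncated form: for $\rho>0$, $\mathcal E^{(\rho)}(u,v)=\int_M\int_{B(x,\rho)}(u(x)-u(y))(v(x)-v(y))\,J(x,dy)\,d\mu(x)$.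 Under $(TJ)$, its closure $(\mathcal E^{(\rho)},\mathcal F^{(\rho)})$ is a regular Dirichlet form on $L^2(M,\mu)$ given by the same formula, with $\mathcal F^{(\rho)}=\mathcal F$. *)

theory Defs
  imports "HOL-Analysis.Analysis"
begin

definition ultrametric :: "('a::metric_space) itself \<Rightarrow> bool" where
  "ultrametric _ \<longleftrightarrow> (\<forall>x y z::'a. dist x y \<le> max (dist x z) (dist z y))"

definition ball_simple :: "('a::metric_space \<Rightarrow> real) \<Rightarrow> bool" where
  "ball_simple u \<longleftrightarrow> (\<exists>(n::nat) (c::nat \<Rightarrow> real) (x::nat \<Rightarrow> 'a) (r::nat \<Rightarrow> real).
      (\<forall>i<n. 0 < r i \<and> compact (cball (x i) (r i))) \<and>
      (\<forall>i<n. \<forall>k<n. i \<noteq> k \<longrightarrow> cball (x i) (r i) \<inter> cball (x k) (r k) = {}) \<and>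
      u = (\<lambda>z. \<Sum>i<n. c i * indicator (cball (x i) (r i)) z))"

text \<open>Energy \<open>\<E>(u) = \<integral>\<integral> (u x - u y)^2 dj(x,y)\<close> with \<open>dj(x,y) = J(x,dy) d\<mu>(x)\<close>
  (as an extended non-negative real).\<close>
definition energy :: "'a measure \<Rightarrow> ('a \<Rightarrow> 'a measure) \<Rightarrow> ('a \<Rightarrow> real) \<Rightarrow> ennreal" where
  "energy mu J u = (\<integral>\<^sup>+x. (\<integral>\<^sup>+y. ennreal ((u x - u y)^2) \<partial>(J x)) \<partial>mu)"

text \<open>The domain \<open>\<F>\<close>: closure of \<open>ball_simple\<close> functions in the norm
  \<open>sqrt(\<E>(u) + \<parallel>u\<parallel>_2^2)\<close>, i.e. \<open>L^2\<close>-limits of \<open>\<E>\<close>-Cauchy sequences of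
  \<open>ball_simple\<close> functions.\<close>
definition domF :: "'a::metric_space measure \<Rightarrow> ('a \<Rightarrow> 'a measure) \<Rightarrow> ('a \<Rightarrow> real) set" where
  "domF mu J = {u. u \<in> borel_measurable mu \<and> integrable mu (\<lambda>x. (u x)^2) \<and>
      (\<exists>v::nat \<Rightarrow> 'a \<Rightarrow> real. (\<forall>n. ball_simple (v n)) \<and>
         ((\<lambda>n. \<integral>\<^sup>+x. ennreal ((v n x - u x)^2) \<partial>mu) \<longlonglongrightarrow> 0) \<and>
         (\<forall>e>0. \<exists>N. \<forall>m\<ge>N. \<forall>n\<ge>N. energy mu J (\<lambda>z. v m z - v n z) < ennreal e))}"

definition Etr :: "'a::metric_space measure \<Rightarrow> ('a \<Rightarrow> 'a measure) \<Rightarrow> real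
    \<Rightarrow> ('a \<Rightarrow> real) \<Rightarrow> ('a \<Rightarrow> real) \<Rightarrow> real" where
  "Etr mu J \<rho> u v = (\<integral>x. (\<integral>y. indicator (cball x \<rho>) y * ((u x - u y) * (v x - v y)) \<partial>(J x)) \<partial>mu)"

end

theory Submission
  imports Defs "HOL-Probability.Probability"
begin

lemma tangent_powr:
  fixes a b p :: real
  assumes "0 < a" "0 \<le> b" "1 \<le> p"
  shows "a powr p - b powr p \<le> p * a powr (p-1) * (a - b)"
proof (cases "b = 0")
  case True
  have e: "a powr p = a powr (p-1) * a" using assms powr_add[of a "p-1" 1] by simp
  have n: "0 \<le> (p - 1) * (a powr (p-1) * a)" using assms by simp
  have "p * a powr (p-1) * (a - b) = a powr p + (p - 1) * (a powr (p-1) * a)"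
    using True by (simp add: e algebra_simps)
  then show ?thesis using True n by simp
next
  case False
  then have b: "b > 0" using assms by simp
  have "b powr p - a powr p \<ge> (p * a powr (p-1)) * (b - a)"
    apply (rule convex_on_imp_above_tangent[where A="{0<..}"])
    using assms b powr_convex[OF assms(3)]
    by (auto simp: interior_open intro!: derivative_eq_intros)
  then show ?thesis by (simp add: algebra_simps)
qed

lemma key_ineq:
  fixes a b p :: real
  assumes "0 \<le> a" "0 \<le> b" "1 \<le> p"
  shows "(a powr p - b powr p)^2 \<le> p * ((a - b) * (a powr (2*p-1) - b powr (2*p-1)))"
    and "(a - b) * (a powr (2*p-1) - b powr (2*p-1)) \<le> (a powr p - b powr p)^2"
proof -
  have dec: "x powr p = x powr (p-1) * x \<and> x powr (2*p-1) = x powr (p-1) * x powr (p-1) * x" if "0 \<le> x" for x :: real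
  proof (cases "x = 0")
    case True then show ?thesis by simp
  next
    case False
    then have "x > 0" using that by simp
    then show ?thesis
      by (simp add: powr_mult_base powr_add[symmetric] algebra_simps)
  qed
  define A where "A = a powr (p-1)"
  define B where "B = b powr (p-1)"
  have eA: "a powr p = A * a" "a powr (2*p-1) = A*A*a" using dec[OF assms(1)] A_def by auto
  have eB: "b powr p = B * b" "b powr (2*p-1) = B*B*b" using dec[OF assms(2)] B_def by auto
  have A0: "A \<ge> 0" "B \<ge> 0" by (auto simp: A_def B_def)
  show "(a - b) * (a powr (2*p-1) - b powr (2*p-1)) \<le> (a powr p - b powr p)^2"
  proof -
    have "0 \<le> (A - B)^2 * a * b" using A0 assms by simp
    then show ?thesis unfolding eA eB by (simp add: power2_eq_square algebra_simps)
  qed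
  have main: "(a powr p - b powr p)^2 \<le> p * ((a - b) * (a powr (2*p-1) - b powr (2*p-1)))"
    if ab: "b \<le> a" "0 \<le> b" "0 \<le> a" for a b
  proof (cases "a = 0")
    case True then show ?thesis using ab by simp
  next
    case False
    then have a: "a > 0" using ab by simp
    define A where "A = a powr (p-1)"
    define B where "B = b powr (p-1)"
    have eA: "a powr p = A * a" "a powr (2*p-1) = A*A*a" using dec[of a] ab A_def by auto
    have eB: "b powr p = B * b" "b powr (2*p-1) = B*B*b" using dec[of b] ab B_def by auto
    have Ap: "A > 0" using a by (simp add: A_def)
    have B0: "B \<ge> 0" by (simp add: B_def)
    have BA: "B \<le> A" unfolding A_def B_def using ab assms(3) by (intro powr_mono2) auto
    have tan: "A*a - B*b \<le> p * A * (a - b)"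
      using tangent_powr[OF a ab(2) assms(3)] eA eB A_def by simp
    define D where "D = A*a - B*b"
    have D0: "D \<ge> 0" proof -
      have "B*b \<le> A*a" using BA ab B0 by (intro mult_mono) auto
      then show ?thesis unfolding D_def by simp
    qed
    have AD: "A * D \<le> A*A*a - B*B*b"
    proof -
      have "B*B*b \<le> A*B*b" using BA B0 ab by (simp add: mult_right_mono)
      then show ?thesis unfolding D_def by (simp add: algebra_simps)
    qed
    have "D^2 = D * D" by (simp add: power2_eq_square)
    also have "\<dots> \<le> (p * A * (a - b)) * D" using tan D0 D_def by (simp add: mult_right_mono)
    also have "\<dots> = (p * (a-b)) * (A * D)" by (simp add: algebra_simps)
    also have "\<dots> \<le> (p * (a-b)) * (A*A*a - B*B*b)"
      using AD ab assms(3) by (intro mult_left_mono) auto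
    finally show ?thesis unfolding D_def eA eB by (simp add: algebra_simps)
  qed
  show "(a powr p - b powr p)^2 \<le> p * ((a - b) * (a powr (2*p-1) - b powr (2*p-1)))"
  proof (cases "b \<le> a")
    case True then show ?thesis using main assms by auto
  next
    case False
    then have "(b powr p - a powr p)^2 \<le> p * ((b - a) * (b powr (2*p-1) - a powr (2*p-1)))"
      using main assms by auto
    then show ?thesis by (simp add: power2_commute algebra_simps)
  qed
qed
lemma ultra_cball_eq:
  fixes x y :: "'a::metric_space"
  assumes ultra: "ultrametric TYPE('a)" and y: "y \<in> cball x s"
  shows "cball y s = cball x s"
proof -
  have u: "dist a b \<le> max (dist a c) (dist c b)" for a b c :: 'a
    using ultra unfolding ultrametric_def by blast
  have dxy: "dist x y \<le> s" using y by simp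
  show ?thesis
  proof (intro set_eqI iffI)
    fix z assume "z \<in> cball y s"
    then show "z \<in> cball x s" using u[of x z y] dxy by auto
  next
    fix z assume "z \<in> cball x s"
    then show "z \<in> cball y s" using u[of y z x] dxy by (auto simp: dist_commute)
  qed
qed

lemma kernel_restr_meas:
  fixes J :: "'a::{metric_space,second_countable_topology} \<Rightarrow> 'a measure"
  assumes ultra: "ultrametric TYPE('a)"
    and J_kernel: "\<And>A. A \<in> sets borel \<Longrightarrow> (\<lambda>x. emeasure (J x) A) \<in> borel_measurable borel"
    and A: "A \<in> sets borel" and s: "0 < s"
  shows "(\<lambda>x. emeasure (J x) (A - cball x s)) \<in> borel_measurable borel"
proof -
  obtain D :: "'a set" where D: "countable D" "\<And>U. open U \<Longrightarrow> U \<noteq> {} \<Longrightarrow> \<exists>d\<in>D. d \<in> U"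
    using countable_dense_exists by blast
  show ?thesis
  proof (rule measurable_piecewise_restrict[where C="(\<lambda>d. cball d s) ` D"])
    show "countable ((\<lambda>d. cball d s) ` D)" using D by simp
    show "\<Omega> \<inter> space borel \<in> sets borel" if "\<Omega> \<in> (\<lambda>d. cball d s) ` D" for \<Omega>
      using that by auto
    show "space borel \<subseteq> \<Union> ((\<lambda>d. cball d s) ` D)"
    proof
      fix x :: 'a
      obtain d where d: "d \<in> D" "d \<in> ball x s" using D(2)[of "ball x s"] s by auto
      then have "cball d s = cball x s" by (intro ultra_cball_eq[OF ultra]) auto
      then show "x \<in> \<Union> ((\<lambda>d. cball d s) ` D)" using d s by force
    qed
    show "(\<lambda>x. emeasure (J x) (A - cball x s)) \<in> borel_measurable (restrict_space borel \<Omega>)"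
      if "\<Omega> \<in> (\<lambda>d. cball d s) ` D" for \<Omega>
    proof -
      obtain d where d: "\<Omega> = cball d s" using \<open>\<Omega> \<in> _\<close> by auto
      have meas: "(\<lambda>x. emeasure (J x) (A - \<Omega>)) \<in> borel_measurable (restrict_space borel \<Omega>)"
        using J_kernel[of "A - \<Omega>"] A d by (intro measurable_restrict_space1) auto
      have eq: "emeasure (J x) (A - cball x s) = emeasure (J x) (A - \<Omega>)" if "x \<in> space (restrict_space borel \<Omega>)" for x
      proof -
        have "x \<in> cball d s" using that d by (simp add: space_restrict_space)
        then have "cball x s = cball d s" by (rule ultra_cball_eq[OF ultra])
        then show ?thesis using d by simp
      qed
      have "(\<lambda>x. emeasure (J x) (A - cball x s)) \<in> borel_measurable (restrict_space borel \<Omega>) \<longleftrightarrow>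
            (\<lambda>x. emeasure (J x) (A - \<Omega>)) \<in> borel_measurable (restrict_space borel \<Omega>)"
        by (rule measurable_cong) (rule eq)
      then show ?thesis using meas by blast
    qed
  qed
qed

lemma kernel_nn_meas:
  fixes J :: "'a::{metric_space,second_countable_topology} \<Rightarrow> 'a measure"
    and G :: "'a \<Rightarrow> 'a \<Rightarrow> ennreal" and R0 :: ereal
  assumes ultra: "ultrametric TYPE('a)"
    and sets_J: "\<And>x. sets (J x) = sets borel"
    and J_kernel: "\<And>A. A \<in> sets borel \<Longrightarrow> (\<lambda>x. emeasure (J x) A) \<in> borel_measurable borel"
    and R0_pos: "0 < R0"
    and TJ: "\<exists>C::real. \<forall>x. \<forall>s. 0 < s \<and> ereal s < R0 \<longrightarrow>
        emeasure (J x) (- cball x s) \<le> ennreal (C * s powr (- \<beta>))"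
    and G: "(\<lambda>(x,y). G x y) \<in> borel_measurable (borel \<Otimes>\<^sub>M borel)"
    and G0: "\<And>x. G x x = 0"
  shows "(\<lambda>x. \<integral>\<^sup>+y. G x y \<partial>J x) \<in> borel_measurable borel"
proof -
  obtain C :: real where C: "\<And>x s. 0 < s \<Longrightarrow> ereal s < R0 \<Longrightarrow>
        emeasure (J x) (- cball x s) \<le> ennreal (C * s powr (- \<beta>))"
    using TJ by metis
  obtain s0 where s0: "0 < s0" "ereal s0 < R0"
    using ereal_dense2[OF R0_pos] by auto
  define s where "s n = s0 / real (Suc n)" for n
  have s_pos: "0 < s n" for n using s0 by (simp add: s_def)
  have s_le: "s n \<le> s0" for n using s0 by (simp add: s_def divide_le_eq)
  have s_R0: "ereal (s n) < R0" for n by (rule le_less_trans[OF _ s0(2)]) (simp add: s_le)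
  define X where "X n = \<bar>C\<bar> * s n powr (- \<beta>)" for n
  have X0: "0 \<le> X n" for n by (simp add: X_def)
  define c where "c n = 1 / (X n + 1)" for n
  have c_pos: "0 < c n" for n using X0[of n] by (simp add: c_def)
  have cX: "c n * X n \<le> 1" for n using X0[of n] by (simp add: c_def)
  have space_J: "space (J x) = UNIV" for x using sets_eq_imp_space_eq[OF sets_J[of x]] by simp
  have ind_meas: "(\<lambda>y. ennreal (c n) * indicator (- cball x (s n)) y) \<in> borel_measurable (J x)" for n x
  proof -
    have "(\<lambda>y. ennreal (c n) * indicator (- cball x (s n)) y) \<in> borel_measurable borel"
      by (intro borel_measurable_times_ennreal borel_measurable_const borel_measurable_indicator) auto
    then show ?thesis using measurable_cong_sets[OF sets_J[symmetric] refl] by blast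
  qed
  define L where "L n x = density (J x) (\<lambda>y. ennreal (c n) * indicator (- cball x (s n)) y)" for n x
  have sets_L: "sets (L n x) = sets borel" for n x by (simp add: L_def sets_J)
  have emL: "emeasure (L n x) A = ennreal (c n) * emeasure (J x) (A - cball x (s n))"
    if A: "A \<in> sets borel" for n x A
  proof -
    have A': "A \<in> sets (J x)" using A sets_J by simp
    have "emeasure (L n x) A = (\<integral>\<^sup>+ y. ennreal (c n) * indicator (A - cball x (s n)) y \<partial>J x)"
      unfolding L_def emeasure_density[OF ind_meas A']
      by (rule nn_integral_cong) (simp split: split_indicator)
    also have "\<dots> = ennreal (c n) * emeasure (J x) (A - cball x (s n))"
      using A by (subst nn_integral_cmult_indicator) (auto simp: sets_J)
    finally show ?thesis .
  qed
  have Lmeas: "L n \<in> measurable borel (subprob_algebra borel)" for n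
  proof (rule measurable_subprob_algebra)
    fix x :: 'a
    have "emeasure (L n x) (space (L n x)) = ennreal (c n) * emeasure (J x) (- cball x (s n))"
      using emL[of UNIV n x] sets_eq_imp_space_eq[OF sets_L[of n x]] by (simp add: Compl_eq_Diff_UNIV)
    also have "\<dots> \<le> ennreal (c n) * ennreal (C * s n powr (- \<beta>))"
      using C[OF s_pos s_R0] by (intro mult_left_mono) auto
    also have "\<dots> \<le> ennreal (c n) * ennreal (X n)"
      unfolding X_def by (intro mult_left_mono ennreal_leI mult_right_mono) auto
    also have "\<dots> = ennreal (c n * X n)" using c_pos[of n] X0[of n] by (simp add: ennreal_mult)
    also have "\<dots> \<le> 1" using cX[of n] by simp
    finally show "subprob_space (L n x)"
      using sets_eq_imp_space_eq[OF sets_L[of n x]] by (intro subprob_spaceI) auto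
  next
    fix x :: 'a show "sets (L n x) = sets borel" by (rule sets_L)
  next
    fix A :: "'a set" assume A: "A \<in> sets borel"
    have "(\<lambda>x. ennreal (c n) * emeasure (J x) (A - cball x (s n))) \<in> borel_measurable borel"
      by (rule borel_measurable_times_ennreal[OF borel_measurable_const kernel_restr_meas[OF ultra J_kernel A s_pos]])
    then show "(\<lambda>x. emeasure (L n x) A) \<in> borel_measurable borel"
      using emL[OF A] by simp
  qed
  have Gsec: "G x \<in> borel_measurable (J x)" for x
  proof -
    have "(\<lambda>y. (\<lambda>(x,y). G x y) (x, y)) \<in> borel_measurable borel"
      by (rule measurable_Pair2[OF G]) simp
    then have "G x \<in> borel_measurable borel" by (simp add: comp_def)
    then show ?thesis by (simp add: measurable_cong_sets[OF sets_J[of x] refl])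
  qed
  define H where "H n x = (\<integral>\<^sup>+y. indicator (- cball x (s n)) y * G x y \<partial>J x)" for n x
  have H_meas: "H n \<in> borel_measurable borel" for n
  proof -
    have m: "(\<lambda>x. \<integral>\<^sup>+y. G x y \<partial>L n x) \<in> borel_measurable borel"
      using nn_integral_measurable_subprob_algebra2[OF G Lmeas] .
    have eq: "(\<integral>\<^sup>+y. G x y \<partial>L n x) = ennreal (c n) * H n x" for x
    proof -
      have "(\<integral>\<^sup>+y. G x y \<partial>L n x) = (\<integral>\<^sup>+ y. ennreal (c n) * (indicator (- cball x (s n)) y * G x y) \<partial>J x)"
        unfolding L_def by (simp only: nn_integral_density[OF ind_meas Gsec] mult.assoc)
      also have "\<dots> = ennreal (c n) * H n x"
        unfolding H_def
      proof (rule nn_integral_cmult)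
        have "indicator (- cball x (s n)) \<in> borel_measurable (J x)"
          by (simp add: measurable_cong_sets[OF sets_J[of x] refl])
        then show "(\<lambda>y. indicator (- cball x (s n)) y * G x y) \<in> borel_measurable (J x)"
          using Gsec by (intro borel_measurable_times_ennreal) auto
      qed
      finally show ?thesis .
    qed
    have "(\<lambda>x. ennreal (1 / c n) * (\<integral>\<^sup>+y. G x y \<partial>L n x)) \<in> borel_measurable borel"
      by (rule borel_measurable_times_ennreal[OF borel_measurable_const m])
    moreover have "ennreal (1 / c n) * (\<integral>\<^sup>+y. G x y \<partial>L n x) = H n x" for x
    proof -
      have "ennreal (1 / c n) * ennreal (c n) = 1"
        using c_pos[of n] by (simp add: ennreal_mult[symmetric])
      then show ?thesis unfolding eq by (simp only: mult.assoc[symmetric] mult_1)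
    qed
    ultimately show ?thesis by simp
  qed
  have eqSUP: "(\<integral>\<^sup>+y. G x y \<partial>J x) = (SUP n. H n x)" for x
  proof -
    have inc: "incseq (\<lambda>n y. indicator (- cball x (s n)) y * G x y)"
    proof (rule incseq_SucI, rule le_funI)
      fix n y
      have "s (Suc n) \<le> s n" using s0 by (simp add: s_def frac_le)
      then show "indicator (- cball x (s n)) y * G x y \<le> indicator (- cball x (s (Suc n))) y * G x y"
        by (auto split: split_indicator)
    qed
    have sup: "(SUP n. indicator (- cball x (s n)) y * G x y) = G x y" for y
    proof (cases "y = x")
      case True then show ?thesis by (simp add: G0)
    next
      case False
      then have d: "dist x y > 0" by simp
      obtain n :: nat where n: "s0 / dist x y < real n" using reals_Archimedean2 by blast
      have n': "s0 < real n * dist x y" using n d by (simp add: divide_less_eq mult.commute)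
      have "s n < dist x y" using n' d s0 unfolding s_def
        by (simp add: divide_less_eq algebra_simps) (insert zero_le_dist[of x y], linarith)
      then have "indicator (- cball x (s n)) y * G x y = G x y" by simp
      moreover have "indicator (- cball x (s n)) y * G x y \<le> (SUP n. indicator (- cball x (s n)) y * G x y)"
        by (rule SUP_upper) simp
      ultimately have le1: "G x y \<le> (SUP n. indicator (- cball x (s n)) y * G x y)"
        by simp
      have le2: "(SUP n. indicator (- cball x (s n)) y * G x y) \<le> G x y"
        by (rule SUP_least) (auto split: split_indicator)
      show ?thesis by (rule order.antisym[OF le2 le1])
    qed
    have "(\<integral>\<^sup>+y. G x y \<partial>J x) = (\<integral>\<^sup>+y. (SUP n. indicator (- cball x (s n)) y * G x y) \<partial>J x)"
      by (simp add: sup)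
    also have "\<dots> = (SUP n. H n x)"
      unfolding H_def
    proof (rule nn_integral_monotone_convergence_SUP[OF inc])
      fix n
      have "indicator (- cball x (s n)) \<in> borel_measurable (J x)"
        by (simp add: measurable_cong_sets[OF sets_J[of x] refl])
      then show "(\<lambda>y. indicator (- cball x (s n)) y * G x y) \<in> borel_measurable (J x)"
        using Gsec by (intro borel_measurable_times_ennreal) auto
    qed
    finally show ?thesis .
  qed
  have "(\<lambda>x. SUP n. H n x) \<in> borel_measurable borel"
    by (rule borel_measurable_SUP) (simp_all add: H_meas)
  then show ?thesis by (simp only: eqSUP)
qed

lemma sandwich_integral:
  fixes g h :: "'b \<Rightarrow> real" and p :: real
  assumes gm: "g \<in> borel_measurable M" and hm: "h \<in> borel_measurable M"
    and g0: "\<And>x. x \<in> space M \<Longrightarrow> 0 \<le> g x"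
    and gh: "\<And>x. x \<in> space M \<Longrightarrow> g x \<le> h x"
    and hg: "\<And>x. x \<in> space M \<Longrightarrow> h x \<le> p * g x"
    and p: "0 < p"
  shows "integral\<^sup>L M h \<le> p * integral\<^sup>L M g" "integral\<^sup>L M g \<le> integral\<^sup>L M h"
proof -
  have h0: "0 \<le> h x" if "x \<in> space M" for x using g0[OF that] gh[OF that] by linarith
  have "integral\<^sup>L M h \<le> p * integral\<^sup>L M g \<and> integral\<^sup>L M g \<le> integral\<^sup>L M h"
  proof (cases "integrable M h")
    case True
    have gi: "integrable M g"
      by (rule Bochner_Integration.integrable_bound[OF True gm]) (auto intro!: AE_I2 simp: g0 h0 gh)
    have "integral\<^sup>L M h \<le> integral\<^sup>L M (\<lambda>x. p * g x)"
      using True gi hg by (intro integral_mono) auto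
    moreover have "integral\<^sup>L M g \<le> integral\<^sup>L M h"
      using True gi gh by (intro integral_mono) auto
    ultimately show ?thesis by simp
  next
    case False
    have "\<not> integrable M g"
    proof
      assume "integrable M g"
      then have pgi: "integrable M (\<lambda>x. p * g x)" by simp
      have nb: "norm (h x) \<le> norm (p * g x)" if "x \<in> space M" for x
      proof -
        have "0 \<le> p * g x" using p g0[OF that] by simp
        then show ?thesis using hg[OF that] h0[OF that] by simp
      qed
      have "integrable M h"
        using Bochner_Integration.integrable_bound[OF pgi hm] nb by (auto intro: AE_I2)
      then show False using False by simp
    qed
    then show ?thesis using False by (simp add: not_integrable_integral_eq)
  qed
  then show "integral\<^sup>L M h \<le> p * integral\<^sup>L M g" "integral\<^sup>L M g \<le> integral\<^sup>L M h" by auto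
qed

lemma prod_meas:
  fixes u v :: "'a::{metric_space,second_countable_topology} \<Rightarrow> real"
  assumes u[measurable]: "u \<in> borel_measurable borel" and v[measurable]: "v \<in> borel_measurable borel"
  shows "(\<lambda>(x,y). ennreal (indicator (cball x \<rho>) y * ((u x - u y) * (v x - v y)))) \<in> borel_measurable (borel \<Otimes>\<^sub>M borel)"
proof -
  have dm: "(\<lambda>x. dist (fst x) (snd x)) \<in> borel_measurable ((borel :: 'a measure) \<Otimes>\<^sub>M (borel :: 'a measure))"
    by (rule borel_measurable_dist[OF measurable_fst measurable_snd])
  have S: "{w \<in> space ((borel :: 'a measure) \<Otimes>\<^sub>M (borel :: 'a measure)). dist (fst w) (snd w) \<le> (\<lambda>_. \<rho>) w}
      \<in> sets ((borel :: 'a measure) \<Otimes>\<^sub>M (borel :: 'a measure))"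
    by (rule borel_measurable_le[OF dm borel_measurable_const])
  have ind: "(\<lambda>(x,y). indicator (cball x \<rho>) y :: real) = indicator {w \<in> space ((borel :: 'a measure) \<Otimes>\<^sub>M (borel :: 'a measure)). dist (fst w) (snd w) \<le> (\<lambda>_. \<rho>) w}"
    by (auto simp: fun_eq_iff space_pair_measure split: split_indicator)
  have [measurable]: "(\<lambda>(x,y). indicator (cball x \<rho>) y :: real) \<in> borel_measurable ((borel :: 'a measure) \<Otimes>\<^sub>M (borel :: 'a measure))"
    unfolding ind using S by (rule borel_measurable_indicator)
  show ?thesis by measurable
qed

lemma ultra_same_ind:
  fixes x y x0 :: "'a::metric_space"
  assumes ultra: "ultrametric TYPE('a)" and d: "dist x y \<le> \<rho>" and rr: "\<rho> \<le> r"
  shows "indicator (cball x0 r) x = (indicator (cball x0 r) y :: real)"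
proof -
  have "x \<in> cball x0 r \<longleftrightarrow> y \<in> cball x0 r"
  proof
    assume "x \<in> cball x0 r"
    then have "cball x r = cball x0 r" by (rule ultra_cball_eq[OF ultra])
    moreover have "y \<in> cball x r" using d rr by simp
    ultimately show "y \<in> cball x0 r" by simp
  next
    assume "y \<in> cball x0 r"
    then have "cball y r = cball x0 r" by (rule ultra_cball_eq[OF ultra])
    moreover have "x \<in> cball y r" using d rr by (simp add: dist_commute)
    ultimately show "x \<in> cball x0 r" by simp
  qed
  then show ?thesis by (simp add: indicator_def)
qed

lemma exp_cancel:
  fixes t a b c d :: real
  shows "(exp (- t) * a - exp (- t) * b) * (exp t * c - exp t * d) = (a - b) * (c - d)"
proof -
  have "(exp (- t) * a - exp (- t) * b) * (exp t * c - exp t * d) = (exp (- t) * exp t) * ((a - b) * (c - d))"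
    by (simp add: algebra_simps)
  also have "exp (- t) * exp t = 1" by (simp add: exp_minus_inverse mult.commute)
  finally show ?thesis by simp
qed

theorem corollary1:
  fixes mu :: "('a::{metric_space, second_countable_topology}) measure"
    and J :: "'a \<Rightarrow> 'a measure"
    and \<beta> :: real and R0 :: ereal
    and x0 :: 'a and r \<rho> lam p :: real and f :: "'a \<Rightarrow> real"
  assumes ultra: "ultrametric TYPE('a)"
    and loc_compact: "locally_compact_space (euclidean :: 'a topology)"
    and sets_mu: "sets mu = sets borel"
    and radon: "\<And>K. compact K \<Longrightarrow> emeasure mu K < \<infinity>"
    and full_supp: "\<And>U. open U \<Longrightarrow> U \<noteq> {} \<Longrightarrow> emeasure mu U > 0"
    and sets_J: "\<And>x. sets (J x) = sets borel"
    and J_kernel: "\<And>A. A \<in> sets borel \<Longrightarrow> (\<lambda>x. emeasure (J x) A) \<in> borel_measurable borel"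
    and J_offdiag: "\<And>x. emeasure (J x) {x} = 0"
    and j_sym: "\<And>A B. A \<in> sets borel \<Longrightarrow> B \<in> sets borel \<Longrightarrow>
        (\<integral>\<^sup>+x. indicator A x * emeasure (J x) B \<partial>mu) = (\<integral>\<^sup>+x. indicator B x * emeasure (J x) A \<partial>mu)"
    and j_ball: "\<And>x r. 0 < r \<Longrightarrow>
        (\<integral>\<^sup>+y. indicator (cball x r) y * emeasure (J y) (- cball x r) \<partial>mu) < \<infinity>"
    and beta_pos: "0 < \<beta>"
    and R0_pos: "0 < R0"
    and R0_le_diam: "R0 \<le> (SUP x\<in>(UNIV::'a set). SUP y\<in>(UNIV::'a set). ereal (dist x y))"
    and TJ: "\<exists>C::real. \<forall>x. \<forall>s. 0 < s \<and> ereal s < R0 \<longrightarrow>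
        emeasure (J x) (- cball x s) \<le> ennreal (C * s powr (- \<beta>))"
    and r_pos: "0 < r"
    and rho: "0 < \<rho>" "\<rho> \<le> r"
    and p: "1 \<le> p"
    and f_nonneg: "\<And>x. 0 \<le> f x"
    and f_F: "f \<in> domF mu J"
    and f_Linf: "\<exists>K. AE x in mu. \<bar>f x\<bar> \<le> K"
  shows "Etr mu J \<rho> (\<lambda>x. exp (- (lam * indicator (cball x0 r) x)) * f x)
                     (\<lambda>x. exp (lam * indicator (cball x0 r) x) * f x powr (2 * p - 1))
         \<ge> (1 / p) * Etr mu J \<rho> (\<lambda>x. f x powr p) (\<lambda>x. f x powr p)"
  proof -
  have fm[measurable]: "f \<in> borel_measurable borel"
    using f_F by (simp add: domF_def measurable_cong_sets[OF sets_mu refl])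
  have p0: "0 < p" using p by simp
  define q where "q = 2 * p - 1"
  define gk where "gk x y = indicator (cball x \<rho>) y * ((f x - f y) * (f x powr q - f y powr q))" for x y
  define gh where "gh x y = indicator (cball x \<rho>) y * ((f x powr p - f y powr p) * (f x powr p - f y powr p))" for x y
  have ptw: "0 \<le> gk x y \<and> gk x y \<le> gh x y \<and> gh x y \<le> p * gk x y" for x y
  proof -
    have k1: "(f x powr p - f y powr p)^2 \<le> p * ((f x - f y) * (f x powr q - f y powr q))"
      using key_ineq(1)[OF f_nonneg f_nonneg p] unfolding q_def .
    have k2: "(f x - f y) * (f x powr q - f y powr q) \<le> (f x powr p - f y powr p)^2"
      using key_ineq(2)[OF f_nonneg f_nonneg p] unfolding q_def .
    have sq: "0 \<le> (f x powr p - f y powr p)^2" by simp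
    have k0: "0 \<le> (f x - f y) * (f x powr q - f y powr q)"
    proof -
      have "0 \<le> p * ((f x - f y) * (f x powr q - f y powr q))" using k1 sq by linarith
      then show ?thesis using p0 by (simp add: zero_le_mult_iff)
    qed
    show ?thesis using k0 k1 k2
      unfolding gk_def gh_def by (simp add: power2_eq_square split: split_indicator)
  qed
  have cb[measurable]: "cball x \<rho> \<in> sets borel" for x by simp
  have fq[measurable]: "(\<lambda>x. f x powr q) \<in> borel_measurable borel" by measurable
  have fp[measurable]: "(\<lambda>x. f x powr p) \<in> borel_measurable borel" by measurable
  have secK: "gk x \<in> borel_measurable (J x)" for x
  proof -
    have "gk x \<in> borel_measurable borel" unfolding gk_def by measurable
    then show ?thesis by (simp add: measurable_cong_sets[OF sets_J[of x] refl])
  qed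
  have secH: "gh x \<in> borel_measurable (J x)" for x
  proof -
    have "gh x \<in> borel_measurable borel" unfolding gh_def by measurable
    then show ?thesis by (simp add: measurable_cong_sets[OF sets_J[of x] refl])
  qed
  define IK where "IK x = (\<integral>y. gk x y \<partial>J x)" for x
  define IH where "IH x = (\<integral>y. gh x y \<partial>J x)" for x
  have inner: "IH x \<le> p * IK x \<and> IK x \<le> IH x \<and> 0 \<le> IK x" for x
  proof -
    have "IH x \<le> p * IK x" "IK x \<le> IH x"
      unfolding IK_def IH_def
      using sandwich_integral[OF secK[of x] secH[of x] _ _ _ p0] ptw by auto
    moreover have "0 \<le> IK x" unfolding IK_def using ptw by (intro integral_nonneg_AE AE_I2) auto
    ultimately show ?thesis by simp
  qed
  have IKm: "IK \<in> borel_measurable borel"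
  proof -
    have eq: "IK x = enn2real (\<integral>\<^sup>+y. ennreal (gk x y) \<partial>J x)" for x
      unfolding IK_def using secK ptw by (intro integral_eq_nn_integral AE_I2) auto
    have "(\<lambda>x. \<integral>\<^sup>+y. ennreal (gk x y) \<partial>J x) \<in> borel_measurable borel"
    proof (rule kernel_nn_meas[OF ultra sets_J J_kernel R0_pos TJ])
      show "(\<lambda>(x, y). ennreal (gk x y)) \<in> borel_measurable (borel \<Otimes>\<^sub>M borel)"
        unfolding gk_def by (rule prod_meas[OF fm fq])
      show "\<And>x. ennreal (gk x x) = 0" by (simp add: gk_def)
    qed
    then show ?thesis unfolding eq by measurable
  qed
  have IHm: "IH \<in> borel_measurable borel"
  proof -
    have eq: "IH x = enn2real (\<integral>\<^sup>+y. ennreal (gh x y) \<partial>J x)" for x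
      unfolding IH_def using secH ptw by (intro integral_eq_nn_integral AE_I2) (auto intro: order_trans)
    have "(\<lambda>x. \<integral>\<^sup>+y. ennreal (gh x y) \<partial>J x) \<in> borel_measurable borel"
    proof (rule kernel_nn_meas[OF ultra sets_J J_kernel R0_pos TJ])
      show "(\<lambda>(x, y). ennreal (gh x y)) \<in> borel_measurable (borel \<Otimes>\<^sub>M borel)"
        unfolding gh_def by (rule prod_meas[OF fp fp])
      show "\<And>x. ennreal (gh x x) = 0" by (simp add: gh_def)
    qed
    then show ?thesis unfolding eq by measurable
  qed
  have IKm': "IK \<in> borel_measurable mu" using IKm by (simp add: measurable_cong_sets[OF sets_mu refl])
  have IHm': "IH \<in> borel_measurable mu" using IHm by (simp add: measurable_cong_sets[OF sets_mu refl])
  have outer: "(\<integral>x. IH x \<partial>mu) \<le> p * (\<integral>x. IK x \<partial>mu)"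
    using sandwich_integral(1)[OF IKm' IHm' _ _ _ p0] inner by auto
  have lhs: "Etr mu J \<rho> (\<lambda>x. exp (- (lam * indicator (cball x0 r) x)) * f x)
                     (\<lambda>x. exp (lam * indicator (cball x0 r) x) * f x powr (2 * p - 1)) = (\<integral>x. IK x \<partial>mu)"
    unfolding Etr_def IK_def
  proof (intro Bochner_Integration.integral_cong refl)
    fix x y
    show "indicator (cball x \<rho>) y *
          ((exp (- (lam * indicator (cball x0 r) x)) * f x - exp (- (lam * indicator (cball x0 r) y)) * f y) *
           (exp (lam * indicator (cball x0 r) x) * f x powr (2 * p - 1) - exp (lam * indicator (cball x0 r) y) * f y powr (2 * p - 1)))
        = gk x y"
    proof (cases "y \<in> cball x \<rho>")
      case True
      then have "dist x y \<le> \<rho>" by simp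
      then have e: "indicator (cball x0 r) y = (indicator (cball x0 r) x :: real)"
        using ultra_same_ind[OF ultra _ rho(2)] by metis
      show ?thesis unfolding e gk_def q_def exp_cancel by simp
    next
      case False
      then show ?thesis by (simp add: gk_def)
    qed
  qed
  have rhs: "Etr mu J \<rho> (\<lambda>x. f x powr p) (\<lambda>x. f x powr p) = (\<integral>x. IH x \<partial>mu)"
    unfolding Etr_def IH_def gh_def by (rule refl)
  have "(1 / p) * (\<integral>x. IH x \<partial>mu) \<le> (1 / p) * (p * (\<integral>x. IK x \<partial>mu))"
    by (rule mult_left_mono[OF outer]) (simp add: p0 less_imp_le)
  also have "\<dots> = (\<integral>x. IK x \<partial>mu)" using p0 by simp
  finally have fin: "(1 / p) * (\<integral>x. IH x \<partial>mu) \<le> (\<integral>x. IK x \<partial>mu)" .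
  show ?thesis by (subst lhs, subst rhs, rule fin)
qed

end
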